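(* Let $\mathcal C$ be a Riemannian annulus, i.e. a surface diffeomorphic to $\mathbb S^1\times[0,1]$ with a Riemannian metric, and let $M>0$ be its conformal modulus. Let $\nu\in\mathbb R\setminus\mathbb Z$ and let $\mu_1(\mathcal C,\nu)$ denote the first magnetic Neumann eigenvalue of $\mathcal C$ for a smooth closed $1$-form with flux $\nu$ around a boundary circle. Then $$|\mathcal C|\,\mu_1(\mathcal C,\nu)\le 4\pi M\min_{n\in\mathbb Z}|\nu-n|^2,$$ with equality if and only if $\mathcal C$ is homothetic to the flat cylinder $\mathcal C_M=\mathbb S^1\times[-M,M]$.
   Context: The conformal modulus of $\mathcal C$ is the unique $M>0$ such that $\mathcal C$ is conformally equivalent to the flat cylinder $\mathcal C_M=\mathbb S^1\times[-M,M]$ with metric $d\theta^2+dz^2$ (here $\mathbb S^1$ has length $2\pi$). For a smooth real $1$-form $A$, $d^Au=du-iuA$ on complex functions and $\mu_1(\mathcal C,A)=\min_{0\ne u\in H^1(\mathcal C)}\int_{\mathcal C}|d^Au|^2/\int_{\mathcal C}|u|^2$. Any two closed $1$-forms on $\mathcal C$ with the same flux $\nu=\frac1{2\pi}\oint A$ around a boundary circle give the same value, denoted $\mu_1(\mathcal C,\nu)$. *)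

theory Defs
  imports "HOL-Analysis.Analysis"
begin

text \<open>By the definition of the conformal modulus, a Riemannian annulus C of modulus M
is isometric to the flat cylinder S^1 x [-M,M] (coordinates theta, z) carrying the metric
rho * (dtheta^2 + dz^2) for a smooth positive conformal factor rho.  Functions on
S^1 x [-M,M] are represented as functions on real x real that are 2pi-periodic in theta;
the fundamental domain is [0,2pi] x [-M,M].\<close>

definition strip :: "real \<Rightarrow> (real \<times> real) set" where
  "strip M = UNIV \<times> {-M..M}"

definition fund_dom :: "real \<Rightarrow> (real \<times> real) set" where
  "fund_dom M = cbox (0, -M) (2*pi, M)"

definition theta_periodic :: "(real \<times> real \<Rightarrow> 'a) \<Rightarrow> bool" where
  "theta_periodic f \<longleftrightarrow> (\<forall>t z. f (t + 2*pi, z) = f (t, z))"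

definition d_theta :: "(real \<times> real \<Rightarrow> 'a::real_normed_vector) \<Rightarrow> real \<times> real \<Rightarrow> 'a" where
  "d_theta f x = frechet_derivative f (at x) (1, 0)"

definition d_z :: "(real \<times> real \<Rightarrow> 'a::real_normed_vector) \<Rightarrow> real \<times> real \<Rightarrow> 'a" where
  "d_z f x = frechet_derivative f (at x) (0, 1)"

coinductive smooth2 :: "(real \<times> real \<Rightarrow> real) \<Rightarrow> bool" where
  "(\<forall>x. f differentiable (at x)) \<Longrightarrow> smooth2 (d_theta f) \<Longrightarrow> smooth2 (d_z f) \<Longrightarrow> smooth2 f"

definition conf_factor :: "real \<Rightarrow> (real \<times> real \<Rightarrow> real) \<Rightarrow> bool" where
  "conf_factor M \<rho> \<longleftrightarrow> smooth2 \<rho> \<and> theta_periodic \<rho> \<and> (\<forall>x\<in>strip M. \<rho> x > 0)"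

definition area :: "real \<Rightarrow> (real \<times> real \<Rightarrow> real) \<Rightarrow> real" where
  "area M \<rho> = integral (fund_dom M) \<rho>"

definition trial_fun :: "(real \<times> real \<Rightarrow> complex) \<Rightarrow> bool" where
  "trial_fun u \<longleftrightarrow> theta_periodic u \<and> (\<forall>x. u differentiable (at x))
     \<and> continuous_on UNIV (d_theta u) \<and> continuous_on UNIV (d_z u)"

text \<open>Magnetic Dirichlet energy for the closed 1-form A = nu dtheta (flux nu).  In dimension two
the Dirichlet energy is conformally invariant, so it equals the flat one.\<close>
definition mag_energy :: "real \<Rightarrow> real \<Rightarrow> (real \<times> real \<Rightarrow> complex) \<Rightarrow> real" where
  "mag_energy M \<nu> u = integral (fund_dom M)
     (\<lambda>x. (cmod (d_theta u x - \<i> * u x * of_real \<nu>))\<^sup>2 + (cmod (d_z u x))\<^sup>2)"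

definition l2_mass :: "real \<Rightarrow> (real \<times> real \<Rightarrow> real) \<Rightarrow> (real \<times> real \<Rightarrow> complex) \<Rightarrow> real" where
  "l2_mass M \<rho> u = integral (fund_dom M) (\<lambda>x. \<rho> x * (cmod (u x))\<^sup>2)"

definition mu1 :: "real \<Rightarrow> (real \<times> real \<Rightarrow> real) \<Rightarrow> real \<Rightarrow> real" where
  "mu1 M \<rho> \<nu> = Inf {mag_energy M \<nu> u / l2_mass M \<rho> u | u. trial_fun u \<and> l2_mass M \<rho> u > 0}"

definition homothetic_flat :: "real \<Rightarrow> (real \<times> real \<Rightarrow> real) \<Rightarrow> bool" where
  "homothetic_flat M \<rho> \<longleftrightarrow> (\<exists>c>0. \<forall>x\<in>strip M. \<rho> x = c)"

end

theory Submission imports Defs begin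

lemma integral_nonneg_any:
  fixes f :: "'n::euclidean_space \<Rightarrow> real"
  assumes "\<And>x. x \<in> S \<Longrightarrow> 0 \<le> f x"
  shows "0 \<le> integral S f"
  using assms integral_nonneg not_integrable_integral by (metis order_refl)

lemma dirichlet_wirt:
  fixes h h' :: "real \<Rightarrow> real"
  assumes d: "\<And>x. (h has_real_derivative h' x) (at x)" and c: "continuous_on UNIV h'"
    and ha: "h a = 0" and hb: "h (a+pi) = 0"
  shows "integral {a..a+pi} (\<lambda>x. (h x)\<^sup>2) \<le> integral {a..a+pi} (\<lambda>x. (h' x)\<^sup>2)"
proof (rule field_le_mult_one_interval)
  fix z :: real assume z: "0 < z" "z < 1"
  define k where "k = sqrt z"
  have k: "0 < k" "k < 1" "k*k = z" using z by (auto simp: k_def real_sqrt_lt_1_iff)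
  define m where "m = a + pi/2"
  define \<phi> where "\<phi> x = - k * tan (k*(x-m))" for x
  define F where "F x = \<phi> x * (h x)\<^sup>2" for x
  define F' where "F' x = (- k*k - (\<phi> x)\<^sup>2) * (h x)\<^sup>2 + 2 * \<phi> x * h x * h' x" for x
  have hc: "continuous_on UNIV h"
    using d by (meson DERIV_isCont continuous_at_imp_continuous_on)
  have cosnz: "cos (k*(x-m)) \<noteq> 0" if "x \<in> {a..a+pi}" for x
  proof -
    have "\<bar>x-m\<bar> \<le> pi/2" using that unfolding m_def by (auto simp: abs_if)
    then have "\<bar>k*(x-m)\<bar> \<le> k*(pi/2)" using k unfolding abs_mult
      by (simp add: mult_left_mono)
    also have "\<dots> < pi/2" using k by (simp add: pi_gt_zero)
    finally have "\<bar>k*(x-m)\<bar> < pi/2" .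
    then have "cos (k*(x-m)) > 0" by (intro cos_gt_zero_pi) auto
    then show ?thesis by simp
  qed
  have dphi: "(\<phi> has_real_derivative (- k*k - (\<phi> x)\<^sup>2)) (at x)" if "x \<in> {a..a+pi}" for x
  proof -
    have "((\<lambda>x. tan (k*(x-m))) has_real_derivative (inverse ((cos (k*(x-m)))\<^sup>2) * (k * 1))) (at x)"
      by (rule DERIV_chain2[of tan _ "\<lambda>x. k*(x-m)", OF DERIV_tan[OF cosnz[OF that]]]) (auto intro!: derivative_eq_intros)
    then have "(\<phi> has_real_derivative (-k * (inverse ((cos (k*(x-m)))\<^sup>2) * (k * 1)))) (at x)"
      unfolding \<phi>_def by (intro DERIV_cmult)
    moreover have "-k * (inverse ((cos (k*(x-m)))\<^sup>2) * (k * 1)) = - k*k - (\<phi> x)\<^sup>2"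
    proof -
      have e: "inverse ((cos (k*(x-m)))\<^sup>2) = 1 + (tan (k*(x-m)))\<^sup>2"
        using tan_sec[OF cosnz[OF that]] by (simp add: power_inverse)
      show ?thesis unfolding \<phi>_def by (subst e) (simp add: power2_eq_square algebra_simps)
    qed
    ultimately show ?thesis by simp
  qed
  have dF: "(F has_vector_derivative F' x) (at x within {a..a+pi})" if "x \<in> {a..a+pi}" for x
  proof -
    have hh: "((\<lambda>x. (h x)\<^sup>2) has_real_derivative (h' x * h x + h' x * h x)) (at x)"
      unfolding power2_eq_square by (rule DERIV_mult[OF d d])
    have "(F has_real_derivative ((- k*k - (\<phi> x)\<^sup>2) * (h x)\<^sup>2 + (h' x * h x + h' x * h x) * \<phi> x)) (at x)"
      unfolding F_def by (rule DERIV_mult[OF dphi[OF that] hh])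
    moreover have "(- k*k - (\<phi> x)\<^sup>2) * (h x)\<^sup>2 + (h' x * h x + h' x * h x) * \<phi> x = F' x"
      unfolding F'_def by (simp add: algebra_simps)
    ultimately have "(F has_real_derivative F' x) (at x)" by simp
    then show ?thesis
      by (simp add: has_real_derivative_iff_has_vector_derivative has_vector_derivative_at_within)
  qed
  have iF: "(F' has_integral 0) {a..a+pi}"
    using fundamental_theorem_of_calculus[of a "a+pi" F F', OF _ dF] by (simp add: F_def ha hb)
  have cphi: "continuous_on {a..a+pi} \<phi>"
    using dphi by (meson DERIV_isCont continuous_at_imp_continuous_on)
  have i1: "((\<lambda>x. (h' x)\<^sup>2) has_integral integral {a..a+pi} (\<lambda>x. (h' x)\<^sup>2)) {a..a+pi}"
    by (intro integrable_integral integrable_continuous_interval continuous_intros continuous_on_subset[OF c]) auto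
  have i2: "((\<lambda>x. (h x)\<^sup>2) has_integral integral {a..a+pi} (\<lambda>x. (h x)\<^sup>2)) {a..a+pi}"
    by (intro integrable_integral integrable_continuous_interval continuous_intros continuous_on_subset[OF hc]) auto
  have hi: "((\<lambda>x. (h' x)\<^sup>2 - z * (h x)\<^sup>2 - F' x) has_integral
     (integral {a..a+pi} (\<lambda>x. (h' x)\<^sup>2) - z * integral {a..a+pi} (\<lambda>x. (h x)\<^sup>2) - 0)) {a..a+pi}"
    by (intro has_integral_diff has_integral_mult_right i1 i2 iF)
  have eq: "(h' x)\<^sup>2 - z * (h x)\<^sup>2 - F' x = (h' x - \<phi> x * h x)\<^sup>2" for x
    unfolding F'_def k(3)[symmetric] by (simp add: power2_eq_square algebra_simps)
  have "((\<lambda>x. (h' x - \<phi> x * h x)\<^sup>2) has_integral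
     (integral {a..a+pi} (\<lambda>x. (h' x)\<^sup>2) - z * integral {a..a+pi} (\<lambda>x. (h x)\<^sup>2) - 0)) {a..a+pi}"
    using hi by (simp only: eq)
  then have "0 \<le> integral {a..a+pi} (\<lambda>x. (h' x)\<^sup>2) - z * integral {a..a+pi} (\<lambda>x. (h x)\<^sup>2) - 0"
    by (rule has_integral_nonneg) simp
  then show "z * integral {a..a+pi} (\<lambda>x. (h x)\<^sup>2) \<le> integral {a..a+pi} (\<lambda>x. (h' x)\<^sup>2)" by simp
qed


lemma periodic_shift_integral:
  fixes g :: "real \<Rightarrow> real"
  assumes c: "continuous_on UNIV g" and p: "\<And>x. g (x + 2*pi) = g x" and a: "0 \<le> a" "a \<le> 2*pi"
  shows "integral {a..a+2*pi} g = integral {0..2*pi} g"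
proof -
  have int: "g integrable_on {u..v}" for u v
    by (intro integrable_continuous_interval continuous_on_subset[OF c]) auto
  have "integral {a..a+2*pi} g = integral {a..2*pi} g + integral {2*pi..a+2*pi} g"
    using Henstock_Kurzweil_Integration.integral_combine[where a=a and c="2*pi" and b="a+2*pi" and f=g] a int by simp
  also have "integral {2*pi..a+2*pi} g = integral {0..a} (g \<circ> (+) (2*pi))"
    using integral_shift_Icc_real[of 0 a g "2*pi"] by (simp add: add.commute)
  also have "g \<circ> (+) (2*pi) = g" using p by (auto simp: fun_eq_iff add.commute)
  also have "integral {a..2*pi} g + integral {0..a} g = integral {0..2*pi} g"
    using Henstock_Kurzweil_Integration.integral_combine[where a=0 and c=a and b="2*pi" and f=g] a int by simp
  finally show ?thesis .
qed

lemma periodic_wirt: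
  fixes f f' :: "real \<Rightarrow> real"
  assumes d: "\<And>x. (f has_real_derivative f' x) (at x)" and c: "continuous_on UNIV f'"
    and p: "\<And>x. f (x + 2*pi) = f x" and p': "\<And>x. f' (x + 2*pi) = f' x"
  shows "\<exists>c. integral {0..2*pi} (\<lambda>x. (f x - c)\<^sup>2) \<le> integral {0..2*pi} (\<lambda>x. (f' x)\<^sup>2)"
proof -
  have fc: "continuous_on UNIV f"
    using d by (meson DERIV_isCont continuous_at_imp_continuous_on)
  define G where "G x = f x - f (x + pi)" for x
  have Gc: "continuous_on {0..pi} G" unfolding G_def
    by (intro continuous_intros continuous_on_compose2[OF fc]) auto
  have G0: "G pi = - G 0" unfolding G_def using p[of 0] by simp
  obtain x0 where x0: "0 \<le> x0" "x0 \<le> pi" "G x0 = 0"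
  proof (cases "G 0 \<le> 0")
    case True
    then show ?thesis using IVT'[of G 0 0 pi] Gc G0 that by auto
  next
    case False
    then show ?thesis using IVT2'[of G pi 0 0] Gc G0 that by auto
  qed
  define cc where "cc = f x0"
  have dh: "((\<lambda>x. f x - cc) has_real_derivative f' x) (at x)" for x
    using DERIV_diff[OF d[of x] DERIV_const[of cc "at x"]] by simp
  have w1: "integral {x0..x0+pi} (\<lambda>x. (f x - cc)\<^sup>2) \<le> integral {x0..x0+pi} (\<lambda>x. (f' x)\<^sup>2)"
    by (rule dirichlet_wirt[OF dh c]) (use x0 in \<open>auto simp: cc_def G_def\<close>)
  have f1: "f (x0 + pi) - cc = 0" using x0 by (auto simp: cc_def G_def)
  have f2: "f (x0 + pi + pi) - cc = 0" using p[of x0] by (simp add: cc_def algebra_simps)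
  have w2: "integral {x0+pi..x0+2*pi} (\<lambda>x. (f x - cc)\<^sup>2) \<le> integral {x0+pi..x0+2*pi} (\<lambda>x. (f' x)\<^sup>2)"
    using dirichlet_wirt[OF dh c f1 f2] by (simp add: algebra_simps)
  have c1: "continuous_on UNIV (\<lambda>x. (f x - cc)\<^sup>2)" by (intro continuous_intros fc)
  have c2: "continuous_on UNIV (\<lambda>x. (f' x)\<^sup>2)" by (intro continuous_intros c)
  have int1: "(\<lambda>x. (f x - cc)\<^sup>2) integrable_on {u..v}" for u v
    by (intro integrable_continuous_interval continuous_on_subset[OF c1]) auto
  have int2: "(\<lambda>x. (f' x)\<^sup>2) integrable_on {u..v}" for u v
    by (intro integrable_continuous_interval continuous_on_subset[OF c2]) auto
  have "integral {0..2*pi} (\<lambda>x. (f x - cc)\<^sup>2) = integral {x0..x0+2*pi} (\<lambda>x. (f x - cc)\<^sup>2)"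
    by (rule periodic_shift_integral[OF c1, symmetric]) (use x0 p in auto)
  also have "\<dots> = integral {x0..x0+pi} (\<lambda>x. (f x - cc)\<^sup>2) + integral {x0+pi..x0+2*pi} (\<lambda>x. (f x - cc)\<^sup>2)"
    using Henstock_Kurzweil_Integration.integral_combine[where a=x0 and c="x0+pi" and b="x0+2*pi", OF _ _ int1] by simp
  also have "\<dots> \<le> integral {x0..x0+pi} (\<lambda>x. (f' x)\<^sup>2) + integral {x0+pi..x0+2*pi} (\<lambda>x. (f' x)\<^sup>2)"
    using w1 w2 by simp
  also have "\<dots> = integral {x0..x0+2*pi} (\<lambda>x. (f' x)\<^sup>2)"
    using Henstock_Kurzweil_Integration.integral_combine[where a=x0 and c="x0+pi" and b="x0+2*pi", OF _ _ int2] by simp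
  also have "\<dots> = integral {0..2*pi} (\<lambda>x. (f' x)\<^sup>2)"
    by (rule periodic_shift_integral[OF c2]) (use x0 p' in auto)
  finally show ?thesis by blast
qed


lemma cont_has_int:
  fixes f :: "real \<Rightarrow> real"
  assumes "continuous_on UNIV f"
  shows "(f has_integral integral {a..b} f) {a..b}"
  by (intro integrable_integral integrable_continuous_interval continuous_on_subset[OF assms]) auto

lemma mag_1d:
  fixes V V' :: "real \<Rightarrow> complex" and \<beta> :: real
  assumes d: "\<And>x. (V has_vector_derivative V' x) (at x)" and c: "continuous_on UNIV V'"
    and p: "\<And>x. V (x + 2*pi) = V x" and p': "\<And>x. V' (x + 2*pi) = V' x" and b: "\<bar>\<beta>\<bar> \<le> 1/2"
  shows "\<beta>\<^sup>2 * integral {0..2*pi} (\<lambda>x. (cmod (V x))\<^sup>2)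
     \<le> integral {0..2*pi} (\<lambda>x. (cmod (V' x - \<i> * of_real \<beta> * V x))\<^sup>2)"
proof -
  define f where "f x = Re (V x)" for x
  define g where "g x = Im (V x)" for x
  define f' where "f' x = Re (V' x)" for x
  define g' where "g' x = Im (V' x)" for x
  have df: "\<And>x. (f has_real_derivative f' x) (at x)" unfolding f_def f'_def
    by (rule has_field_derivative_Re[OF d])
  have dg: "\<And>x. (g has_real_derivative g' x) (at x)" unfolding g_def g'_def
    by (rule has_field_derivative_Im[OF d])
  have Vc: "continuous_on UNIV V"
    using d by (meson has_vector_derivative_continuous continuous_at_imp_continuous_on)
  have cf: "continuous_on UNIV f" "continuous_on UNIV g" unfolding f_def g_def
    by (intro continuous_intros Vc)+
  have cf': "continuous_on UNIV f'" "continuous_on UNIV g'" unfolding f'_def g'_def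
    by (intro continuous_intros c)+
  obtain c1 where w1: "integral {0..2*pi} (\<lambda>x. (f x - c1)\<^sup>2) \<le> integral {0..2*pi} (\<lambda>x. (f' x)\<^sup>2)"
    using periodic_wirt[OF df cf'(1)] p p' unfolding f_def f'_def by auto
  obtain c2 where w2: "integral {0..2*pi} (\<lambda>x. (g x - c2)\<^sup>2) \<le> integral {0..2*pi} (\<lambda>x. (g' x)\<^sup>2)"
    using periodic_wirt[OF dg cf'(2)] p p' unfolding g_def g'_def by auto
  have ftc1: "(f' has_integral 0) {0..2*pi}"
    using fundamental_theorem_of_calculus[of 0 "2*pi" f f'] df p[of 0]
    by (simp add: has_real_derivative_iff_has_vector_derivative[symmetric] has_field_derivative_at_within f_def)
  have ftc2: "(g' has_integral 0) {0..2*pi}"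
    using fundamental_theorem_of_calculus[of 0 "2*pi" g g'] dg p[of 0]
    by (simp add: has_real_derivative_iff_has_vector_derivative[symmetric] has_field_derivative_at_within g_def)
  define L where "L x = (cmod (V' x - \<i> * of_real \<beta> * V x))\<^sup>2 - \<beta>\<^sup>2 * (cmod (V x))\<^sup>2" for x
  define R where "R x = (1/2) * (f' x)\<^sup>2 + (1/2) * (g' x)\<^sup>2 - (1/2) * (f x - c1)\<^sup>2 - (1/2) * (g x - c2)\<^sup>2
      + (2*\<beta>*c2) * f' x - (2*\<beta>*c1) * g' x" for x
  have eqL: "L x = (f' x + \<beta> * g x)\<^sup>2 + (g' x - \<beta> * f x)\<^sup>2 - \<beta>\<^sup>2 * ((f x)\<^sup>2 + (g x)\<^sup>2)" for x
    unfolding L_def f_def g_def f'_def g'_def cmod_power2 by (simp add: algebra_simps)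
  have b4: "\<beta>\<^sup>2 \<le> (1/2)\<^sup>2"
    using power_mono[of "\<bar>\<beta>\<bar>" "1/2" 2] b by simp
  have ptw: "R x \<le> L x" for x
  proof -
    have s1: "0 \<le> (1/2) * (f' x + 2*\<beta>*(g x - c2))\<^sup>2 + (1/2) * (1 - 4*\<beta>\<^sup>2) * (g x - c2)\<^sup>2"
      using b4 by (intro add_nonneg_nonneg mult_nonneg_nonneg) (auto simp: power2_eq_square)
    have s2: "0 \<le> (1/2) * (g' x - 2*\<beta>*(f x - c1))\<^sup>2 + (1/2) * (1 - 4*\<beta>\<^sup>2) * (f x - c1)\<^sup>2"
      using b4 by (intro add_nonneg_nonneg mult_nonneg_nonneg) (auto simp: power2_eq_square)
    have "L x - R x = (1/2) * (f' x + 2*\<beta>*(g x - c2))\<^sup>2 + (1/2) * (1 - 4*\<beta>\<^sup>2) * (g x - c2)\<^sup>2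
        + ((1/2) * (g' x - 2*\<beta>*(f x - c1))\<^sup>2 + (1/2) * (1 - 4*\<beta>\<^sup>2) * (f x - c1)\<^sup>2)"
      unfolding eqL R_def by (simp add: power2_eq_square algebra_simps)
    then show ?thesis using s1 s2 by linarith
  qed
  have cL: "continuous_on UNIV L" unfolding L_def by (intro continuous_intros c Vc)
  have iR: "(R has_integral (1/2) * integral {0..2*pi} (\<lambda>x. (f' x)\<^sup>2) + (1/2) * integral {0..2*pi} (\<lambda>x. (g' x)\<^sup>2)
      - (1/2) * integral {0..2*pi} (\<lambda>x. (f x - c1)\<^sup>2) - (1/2) * integral {0..2*pi} (\<lambda>x. (g x - c2)\<^sup>2)
      + (2*\<beta>*c2) * 0 - (2*\<beta>*c1) * 0) {0..2*pi}"
    unfolding R_def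
    by (intro has_integral_add has_integral_diff has_integral_mult_right ftc1 ftc2 cont_has_int continuous_intros cf cf')
  have iL: "(L has_integral integral {0..2*pi} L) {0..2*pi}" by (rule cont_has_int[OF cL])
  have "(1/2) * integral {0..2*pi} (\<lambda>x. (f' x)\<^sup>2) + (1/2) * integral {0..2*pi} (\<lambda>x. (g' x)\<^sup>2)
      - (1/2) * integral {0..2*pi} (\<lambda>x. (f x - c1)\<^sup>2) - (1/2) * integral {0..2*pi} (\<lambda>x. (g x - c2)\<^sup>2)
      + (2*\<beta>*c2) * 0 - (2*\<beta>*c1) * 0 \<le> integral {0..2*pi} L"
    by (rule has_integral_le[OF iR iL]) (use ptw in auto)
  then have L0: "0 \<le> integral {0..2*pi} L" using w1 w2 by linarith
  have "integral {0..2*pi} L = integral {0..2*pi} (\<lambda>x. (cmod (V' x - \<i> * of_real \<beta> * V x))\<^sup>2)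
      - \<beta>\<^sup>2 * integral {0..2*pi} (\<lambda>x. (cmod (V x))\<^sup>2)"
  proof -
    have "(L has_integral integral {0..2*pi} (\<lambda>x. (cmod (V' x - \<i> * of_real \<beta> * V x))\<^sup>2)
      - \<beta>\<^sup>2 * integral {0..2*pi} (\<lambda>x. (cmod (V x))\<^sup>2)) {0..2*pi}"
      unfolding L_def by (intro has_integral_diff has_integral_mult_right cont_has_int continuous_intros c Vc)
    then show ?thesis by (rule integral_unique)
  qed
  then show ?thesis using L0 by linarith
qed


lemma slice_theta:
  fixes u :: "real \<times> real \<Rightarrow> 'a::real_normed_vector"
  assumes "u differentiable (at (t,z))"
  shows "((\<lambda>s. u (s,z)) has_vector_derivative d_theta u (t,z)) (at t)"
proof -
  define D where "D = frechet_derivative u (at (t,z))"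
  have hu: "(u has_derivative D) (at (t,z))" using frechet_derivative_works[THEN iffD1, OF assms] unfolding D_def .
  have hp: "((\<lambda>s. (s,z)) has_derivative (\<lambda>h. (h,0))) (at t)"
    by (rule has_derivative_Pair[OF has_derivative_ident has_derivative_const])
  have 1: "((\<lambda>s. u (s,z)) has_derivative (\<lambda>h. D (h,0))) (at t)"
    using has_derivative_compose[OF hp hu] .
  have 2: "D (h,0) = h *\<^sub>R D (1,0)" for h
  proof -
    have "D (h *\<^sub>R (1,0)) = h *\<^sub>R D (1,0)" by (rule linear_cmul[OF has_derivative_linear[OF hu]])
    moreover have "h *\<^sub>R (1::real, 0::real) = (h,0)" by simp
    ultimately show ?thesis by (simp only:)
  qed
  have 3: "(\<lambda>h. D (h,0)) = (\<lambda>h. h *\<^sub>R D (1,0))" by (rule ext) (rule 2)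
  show ?thesis
    unfolding has_vector_derivative_def d_theta_def D_def[symmetric] using 1 unfolding 3 .
qed

lemma slice_z:
  fixes u :: "real \<times> real \<Rightarrow> 'a::real_normed_vector"
  assumes "u differentiable (at (t,z))"
  shows "((\<lambda>s. u (t,s)) has_vector_derivative d_z u (t,z)) (at z)"
proof -
  define D where "D = frechet_derivative u (at (t,z))"
  have hu: "(u has_derivative D) (at (t,z))" using frechet_derivative_works[THEN iffD1, OF assms] unfolding D_def .
  have hp: "((\<lambda>s. (t,s)) has_derivative (\<lambda>h. (0,h))) (at z)"
    by (rule has_derivative_Pair[OF has_derivative_const has_derivative_ident])
  have 1: "((\<lambda>s. u (t,s)) has_derivative (\<lambda>h. D (0,h))) (at z)"
    using has_derivative_compose[OF hp hu] .
  have 2: "D (0,h) = h *\<^sub>R D (0,1)" for h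
  proof -
    have "D (h *\<^sub>R (0,1)) = h *\<^sub>R D (0,1)" by (rule linear_cmul[OF has_derivative_linear[OF hu]])
    moreover have "h *\<^sub>R (0::real, 1::real) = (0,h)" by simp
    ultimately show ?thesis by (simp only:)
  qed
  have 3: "(\<lambda>h. D (0,h)) = (\<lambda>h. h *\<^sub>R D (0,1))" by (rule ext) (rule 2)
  show ?thesis
    unfolding has_vector_derivative_def d_z_def D_def[symmetric] using 1 unfolding 3 .
qed

lemma d_theta_periodic:
  fixes u :: "real \<times> real \<Rightarrow> 'a::real_normed_vector"
  assumes "\<forall>x. u differentiable (at x)" and "theta_periodic u"
  shows "d_theta u (t + 2*pi, z) = d_theta u (t, z)"
proof -
  have h1: "((\<lambda>s. u (s,z)) has_vector_derivative d_theta u (t + 2*pi,z)) (at (t + 2*pi))"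
    using slice_theta assms(1) by blast
  have "(((\<lambda>s. u (s,z)) \<circ> (\<lambda>s. s + 2*pi)) has_vector_derivative (1 *\<^sub>R d_theta u (t + 2*pi,z))) (at t)"
    by (rule vector_diff_chain_at[of "\<lambda>s. s + 2*pi" 1 t, OF _ h1])
      (use has_vector_derivative_add[OF has_vector_derivative_id has_vector_derivative_const[of "2*pi"]] in simp)
  moreover have "(\<lambda>s. u (s,z)) \<circ> (\<lambda>s. s + 2*pi) = (\<lambda>s. u (s,z))"
    using assms(2) by (auto simp: theta_periodic_def fun_eq_iff)
  ultimately have h2: "((\<lambda>s. u (s,z)) has_vector_derivative d_theta u (t + 2*pi,z)) (at t)" by simp
  show ?thesis
    using vector_derivative_unique_at[OF h2 slice_theta[of u t z]] assms(1) by blast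
qed

lemma cont_has_int2:
  fixes F :: "real \<times> real \<Rightarrow> real"
  assumes "continuous_on UNIV F"
  shows "(F has_integral integral (cbox a b) F) (cbox a b)"
  by (intro integrable_integral integrable_continuous continuous_on_subset[OF assms]) auto

lemma trial_cont:
  assumes "trial_fun u" shows "continuous_on UNIV u"
proof (rule differentiable_imp_continuous_on)
  show "u differentiable_on UNIV" using assms
    by (auto simp: trial_fun_def differentiable_on_def intro: differentiable_at_withinI)
qed

lemma energy_lower:
  fixes u :: "real \<times> real \<Rightarrow> complex" and \<nu> \<beta> :: real and n0 :: int
  assumes u: "trial_fun u" and M: "0 \<le> M" and b: "\<bar>\<beta>\<bar> \<le> 1/2" and nb: "\<nu> = of_int n0 + \<beta>"
  shows "\<beta>\<^sup>2 * integral (fund_dom M) (\<lambda>x. (cmod (u x))\<^sup>2)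
    \<le> integral (fund_dom M) (\<lambda>x. (cmod (d_theta u x - \<i> * u x * of_real \<nu>))\<^sup>2)"
proof -
  have ud: "\<forall>x. u differentiable (at x)" and per: "theta_periodic u"
    and cth: "continuous_on UNIV (d_theta u)" using u by (auto simp: trial_fun_def)
  have uc: "continuous_on UNIV u" by (rule trial_cont[OF u])
  define H where "H x = (cmod (d_theta u x - \<i> * u x * of_real \<nu>))\<^sup>2 - \<beta>\<^sup>2 * (cmod (u x))\<^sup>2" for x
  have Hc: "continuous_on UNIV H" unfolding H_def by (intro continuous_intros uc cth)
  have slice: "0 \<le> integral {0..2*pi} (\<lambda>t. H (t,z))" for z
  proof -
    define E where "E t = exp (\<i> * of_real (- of_int n0 * t))" for t
    define V where "V t = E t * u (t,z)" for t
    define V' where "V' t = E t * (d_theta u (t,z) - \<i> * of_int n0 * u (t,z))" for t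
    have dE: "(E has_vector_derivative (- \<i> * of_int n0 * E t)) (at t)" for t
    proof -
      have "((\<lambda>w. exp (\<i> * (- of_int n0 * w))) has_field_derivative (exp (\<i> * (- of_int n0 * of_real t)) * (\<i> * (- of_int n0)))) (at (of_real t))"
        by (auto intro!: derivative_eq_intros)
      from has_vector_derivative_real_field[OF this] show ?thesis
        unfolding E_def by (simp add: algebra_simps)
    qed
    have dV: "(V has_vector_derivative V' t) (at t)" for t
    proof -
      have "(V has_vector_derivative (E t * d_theta u (t,z) + (- \<i> * of_int n0 * E t) * u (t,z))) (at t)"
        unfolding V_def by (rule has_vector_derivative_mult[OF dE slice_theta]) (use ud in blast)
      then show ?thesis unfolding V'_def by (simp add: algebra_simps)
    qed
    have cE: "continuous_on UNIV E" unfolding E_def by (intro continuous_intros)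
    have cV': "continuous_on UNIV V'" unfolding V'_def
      by (intro continuous_intros cE continuous_on_compose2[OF cth] continuous_on_compose2[OF uc]) auto
    have Ep: "E (t + 2*pi) = E t" for t
    proof -
      have "E (t + 2*pi) = E t * exp (\<i> * of_real (- of_int n0 * (2*pi)))"
        unfolding E_def by (simp add: algebra_simps flip: exp_add)
      also have "exp (\<i> * of_real (- of_int n0 * (2*pi))) = 1"
        by (subst exp_eq_1) (auto intro!: exI[of _ "-n0"])
      finally show ?thesis by simp
    qed
    have Vp: "V (t + 2*pi) = V t" for t
      unfolding V_def using Ep per by (simp add: theta_periodic_def)
    have V'p: "V' (t + 2*pi) = V' t" for t
      unfolding V'_def using Ep per d_theta_periodic[OF ud per] by (simp add: theta_periodic_def)
    have cV: "continuous_on UNIV V"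
      using dV by (meson has_vector_derivative_continuous continuous_at_imp_continuous_on)
    have nE: "cmod (E t) = 1" for t unfolding E_def by (rule norm_exp_i_times)
    have m1: "\<beta>\<^sup>2 * integral {0..2*pi} (\<lambda>t. (cmod (V t))\<^sup>2)
       \<le> integral {0..2*pi} (\<lambda>t. (cmod (V' t - \<i> * of_real \<beta> * V t))\<^sup>2)"
      by (rule mag_1d[OF dV cV' Vp V'p b])
    have e1: "cmod (V t) = cmod (u (t,z))" for t unfolding V_def norm_mult nE by simp
    have e2: "cmod (V' t - \<i> * of_real \<beta> * V t) = cmod (d_theta u (t,z) - \<i> * u (t,z) * of_real \<nu>)" for t
    proof -
      have "V' t - \<i> * of_real \<beta> * V t = E t * (d_theta u (t,z) - \<i> * u (t,z) * of_real \<nu>)"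
        unfolding V'_def V_def nb by (simp add: algebra_simps)
      then show ?thesis by (simp add: norm_mult nE)
    qed
    have "((\<lambda>t. H (t,z)) has_integral integral {0..2*pi} (\<lambda>t. (cmod (V' t - \<i> * of_real \<beta> * V t))\<^sup>2)
         - \<beta>\<^sup>2 * integral {0..2*pi} (\<lambda>t. (cmod (V t))\<^sup>2)) {0..2*pi}"
      unfolding H_def e1[symmetric] e2[symmetric]
      by (intro has_integral_diff has_integral_mult_right cont_has_int continuous_intros cV' cV)
    then have "integral {0..2*pi} (\<lambda>t. H (t,z)) = integral {0..2*pi} (\<lambda>t. (cmod (V' t - \<i> * of_real \<beta> * V t))\<^sup>2)
         - \<beta>\<^sup>2 * integral {0..2*pi} (\<lambda>t. (cmod (V t))\<^sup>2)" by (rule integral_unique)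
    then show ?thesis using m1 by linarith
  qed
  have HH: "(\<lambda>(t,z). H (t,z)) = H" by auto
  have Hc2: "continuous_on (cbox (0,-M) (2*pi,M)) (\<lambda>(t,z). H (t,z))"
    unfolding HH by (rule continuous_on_subset[OF Hc]) simp
  have "integral (fund_dom M) H = integral (cbox 0 (2*pi)) (\<lambda>t. integral (cbox (-M) M) (\<lambda>z. H (t,z)))"
    unfolding fund_dom_def by (rule integral_prod_continuous) (rule continuous_on_subset[OF Hc], auto)
  also have "\<dots> = integral (cbox (-M) M) (\<lambda>z. integral (cbox 0 (2*pi)) (\<lambda>t. H (t,z)))"
    by (rule integral_swap_continuous[where f="\<lambda>t z. H (t,z)", OF Hc2])
  also have "\<dots> \<ge> 0" by (rule integral_nonneg_any) (use slice in \<open>auto simp: cbox_interval\<close>)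
  finally have H0: "0 \<le> integral (fund_dom M) H" .
  have "(H has_integral integral (fund_dom M) (\<lambda>x. (cmod (d_theta u x - \<i> * u x * of_real \<nu>))\<^sup>2)
      - \<beta>\<^sup>2 * integral (fund_dom M) (\<lambda>x. (cmod (u x))\<^sup>2)) (fund_dom M)"
    unfolding H_def fund_dom_def
    by (intro has_integral_diff has_integral_mult_right cont_has_int2 continuous_intros uc cth)
  then have "integral (fund_dom M) H = integral (fund_dom M) (\<lambda>x. (cmod (d_theta u x - \<i> * u x * of_real \<nu>))\<^sup>2)
      - \<beta>\<^sup>2 * integral (fund_dom M) (\<lambda>x. (cmod (u x))\<^sup>2)" by (rule integral_unique)
  then show ?thesis using H0 by linarith
qed


lemma smooth2_props:
  assumes "smooth2 f"
  shows "\<forall>x. f differentiable (at x)" "smooth2 (d_theta f)" "smooth2 (d_z f)"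
  using assms by (auto elim: smooth2.cases)

lemma diff_cont:
  assumes "\<forall>x. f differentiable (at x)" shows "continuous_on UNIV f"
proof (rule differentiable_imp_continuous_on)
  show "f differentiable_on UNIV" using assms
    by (auto simp: differentiable_on_def intro: differentiable_at_withinI)
qed

lemma exp_int_period: "exp (\<i> * of_real (of_int n * (2*pi))) = 1"
  by (subst exp_eq_1) (auto intro!: exI[of _ n])

definition ut :: "int \<Rightarrow> real \<Rightarrow> real \<Rightarrow> (real \<times> real \<Rightarrow> real) \<Rightarrow> real \<times> real \<Rightarrow> complex" where
  "ut n0 t c \<rho> x = exp (\<i> * of_real (of_int n0 * fst x)) * of_real (1 + t * (\<rho> x - c))"

lemma ut_props:
  fixes \<rho> :: "real \<times> real \<Rightarrow> real"
  assumes rd: "\<forall>x. \<rho> differentiable (at x)" and ct: "continuous_on UNIV (d_theta \<rho>)"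
    and cz: "continuous_on UNIV (d_z \<rho>)" and per: "theta_periodic \<rho>"
  shows "trial_fun (ut n0 t c \<rho>)"
    and "d_theta (ut n0 t c \<rho>) x = exp (\<i> * of_real (of_int n0 * fst x)) *
            (\<i> * of_int n0 * of_real (1 + t * (\<rho> x - c)) + of_real (t * d_theta \<rho> x))"
    and "d_z (ut n0 t c \<rho>) x = exp (\<i> * of_real (of_int n0 * fst x)) * of_real (t * d_z \<rho> x)"
proof -
  define E where "E x = exp (\<i> * of_real (of_int n0 * fst x))" for x :: "real \<times> real"
  have uE: "ut n0 t c \<rho> = (\<lambda>x. E x * of_real (1 + t * (\<rho> x - c)))"
    by (auto simp: ut_def E_def fun_eq_iff)
  have L1: "((\<lambda>x::real\<times>real. \<i> * of_real (of_int n0 * fst x)) has_derivative (\<lambda>h. \<i> * of_real (of_int n0 * fst h))) (at x)" for x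
    by (intro derivative_eq_intros) auto
  have L2: "(E has_derivative (\<lambda>h. E x * (\<i> * of_real (of_int n0 * fst h)))) (at x)" for x
    using has_derivative_compose[OF L1 has_field_derivative_imp_has_derivative[OF DERIV_exp]]
    unfolding E_def by simp
  have hr: "(\<rho> has_derivative frechet_derivative \<rho> (at x)) (at x)" for x
    using frechet_derivative_works[THEN iffD1] rd by blast
  have L3: "((\<lambda>x. 1 + t * (\<rho> x - c)) has_derivative (\<lambda>h. t * frechet_derivative \<rho> (at x) h)) (at x)" for x
    by (auto intro!: derivative_eq_intros hr)
  have L4: "((\<lambda>x. complex_of_real (1 + t * (\<rho> x - c))) has_derivative (\<lambda>h. of_real (t * frechet_derivative \<rho> (at x) h))) (at x)" for x
    by (rule has_derivative_of_real[OF L3])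
  have ud: "ut n0 t c \<rho> differentiable (at x)" for x
    unfolding uE differentiable_def using has_derivative_mult[OF L2 L4] by blast
  have cE: "continuous_on UNIV E" unfolding E_def by (intro continuous_intros)
  have cr: "continuous_on UNIV \<rho>" by (rule diff_cont[OF rd])
  have Es: "((\<lambda>s. E (s,b)) has_vector_derivative (\<i> * of_int n0 * E (s,b))) (at s)" for s b
  proof -
    have "((\<lambda>w. exp (\<i> * (of_int n0 * w))) has_field_derivative (exp (\<i> * (of_int n0 * of_real s)) * (\<i> * of_int n0))) (at (of_real s))"
      by (auto intro!: derivative_eq_intros)
    from has_vector_derivative_real_field[OF this] show ?thesis by (simp add: algebra_simps E_def)
  qed
  have rs: "((\<lambda>s. complex_of_real (1 + t * (\<rho> (s,b) - c))) has_vector_derivative of_real (t * d_theta \<rho> (s,b))) (at s)" for s b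
  proof -
    have "((\<lambda>s. \<rho> (s,b)) has_real_derivative d_theta \<rho> (s,b)) (at s)"
      using slice_theta[of \<rho> s b] rd by (simp add: has_real_derivative_iff_has_vector_derivative)
    then have "((\<lambda>s. 1 + t * (\<rho> (s,b) - c)) has_real_derivative (t * d_theta \<rho> (s,b))) (at s)"
      by (auto intro!: derivative_eq_intros)
    then show ?thesis by (rule has_vector_derivative_of_real)
  qed
  have dth: "d_theta (ut n0 t c \<rho>) x = E x * (\<i> * of_int n0 * of_real (1 + t * (\<rho> x - c)) + of_real (t * d_theta \<rho> x))" for x
  proof (cases x)
    case (Pair a b)
    have "((\<lambda>s. ut n0 t c \<rho> (s,b)) has_vector_derivative
        (E (a,b) * of_real (t * d_theta \<rho> (a,b)) + (\<i> * of_int n0 * E (a,b)) * of_real (1 + t * (\<rho> (a,b) - c)))) (at a)"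
      unfolding uE by (rule has_vector_derivative_mult[OF Es rs])
    from vector_derivative_unique_at[OF slice_theta[OF ud] this] show ?thesis
      unfolding Pair by (simp add: algebra_simps)
  qed
  have dz: "d_z (ut n0 t c \<rho>) x = E x * of_real (t * d_z \<rho> x)" for x
  proof (cases x)
    case (Pair a b)
    have Ez: "((\<lambda>s. E (a,s)) has_vector_derivative 0) (at b)"
      unfolding E_def by simp
    have rz: "((\<lambda>s. complex_of_real (1 + t * (\<rho> (a,s) - c))) has_vector_derivative of_real (t * d_z \<rho> (a,b))) (at b)"
    proof -
      have "((\<lambda>s. \<rho> (a,s)) has_real_derivative d_z \<rho> (a,b)) (at b)"
        using slice_z[of \<rho> a b] rd by (simp add: has_real_derivative_iff_has_vector_derivative)
      then have "((\<lambda>s. 1 + t * (\<rho> (a,s) - c)) has_real_derivative (t * d_z \<rho> (a,b))) (at b)"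
        by (auto intro!: derivative_eq_intros)
      then show ?thesis by (rule has_vector_derivative_of_real)
    qed
    have "((\<lambda>s. ut n0 t c \<rho> (a,s)) has_vector_derivative
        (E (a,b) * of_real (t * d_z \<rho> (a,b)) + 0 * of_real (1 + t * (\<rho> (a,b) - c)))) (at b)"
      unfolding uE by (rule has_vector_derivative_mult[OF Ez rz])
    from vector_derivative_unique_at[OF slice_z[OF ud] this] show ?thesis
      unfolding Pair by simp
  qed
  show "d_theta (ut n0 t c \<rho>) x = exp (\<i> * of_real (of_int n0 * fst x)) *
            (\<i> * of_int n0 * of_real (1 + t * (\<rho> x - c)) + of_real (t * d_theta \<rho> x))"
    using dth unfolding E_def .
  show "d_z (ut n0 t c \<rho>) x = exp (\<i> * of_real (of_int n0 * fst x)) * of_real (t * d_z \<rho> x)"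
    using dz unfolding E_def .
  have "continuous_on UNIV (d_theta (ut n0 t c \<rho>))"
  proof -
    have "d_theta (ut n0 t c \<rho>) = (\<lambda>x. E x * (\<i> * of_int n0 * of_real (1 + t * (\<rho> x - c)) + of_real (t * d_theta \<rho> x)))"
      using dth by (rule ext)
    then show ?thesis by (simp only:) (intro continuous_intros cE cr ct)
  qed
  moreover have "continuous_on UNIV (d_z (ut n0 t c \<rho>))"
  proof -
    have "d_z (ut n0 t c \<rho>) = (\<lambda>x. E x * of_real (t * d_z \<rho> x))"
      using dz by (rule ext)
    then show ?thesis by (simp only:) (intro continuous_intros cE cz)
  qed
  moreover have "theta_periodic (ut n0 t c \<rho>)"
    unfolding theta_periodic_def
  proof (intro allI)
    fix s z
    have "ut n0 t c \<rho> (s + 2*pi, z) = exp (\<i> * of_real (of_int n0 * s)) * exp (\<i> * of_real (of_int n0 * (2*pi))) * of_real (1 + t * (\<rho> (s,z) - c))"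
      using per unfolding ut_def theta_periodic_def by (simp add: algebra_simps flip: exp_add)
    then show "ut n0 t c \<rho> (s + 2*pi, z) = ut n0 t c \<rho> (s, z)"
      unfolding exp_int_period by (simp add: ut_def)
  qed
  ultimately show "trial_fun (ut n0 t c \<rho>)" unfolding trial_fun_def using ud by blast
qed


lemma inf_dist:
  fixes \<nu> :: real
  assumes "\<nu> \<notin> \<int>"
  shows "\<exists>n0 \<beta>. \<nu> = of_int n0 + \<beta> \<and> \<bar>\<beta>\<bar> \<le> 1/2 \<and> \<beta> \<noteq> 0 \<and> (INF n::int. \<bar>\<nu> - of_int n\<bar>\<^sup>2) = \<beta>\<^sup>2"
proof (intro exI conjI)
  define n0 where "n0 = round \<nu>"
  define \<beta> where "\<beta> = \<nu> - of_int n0"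
  show "\<nu> = of_int n0 + \<beta>" unfolding \<beta>_def by simp
  have hb: "\<bar>\<beta>\<bar> \<le> 1/2" using of_int_round_abs_le[of \<nu>] unfolding \<beta>_def n0_def by (simp add: abs_minus_commute)
  show "\<bar>\<beta>\<bar> \<le> 1/2" by (rule hb)
  show "\<beta> \<noteq> 0" using assms unfolding \<beta>_def by auto
  have le: "\<beta>\<^sup>2 \<le> \<bar>\<nu> - of_int n\<bar>\<^sup>2" for n :: int
  proof -
    have "\<bar>\<beta>\<bar> \<le> \<bar>\<nu> - of_int n\<bar>"
    proof (cases "n = n0")
      case True then show ?thesis unfolding \<beta>_def by simp
    next
      case False
      then have "1 \<le> \<bar>n - n0\<bar>" by linarith
      then have "1 \<le> \<bar>of_int n - of_int n0 :: real\<bar>"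
        by (metis of_int_1_le_iff of_int_abs of_int_diff)
      then show ?thesis using hb unfolding \<beta>_def by linarith
    qed
    then have "\<bar>\<beta>\<bar>\<^sup>2 \<le> \<bar>\<nu> - of_int n\<bar>\<^sup>2" by (rule power_mono) simp
    then show ?thesis by simp
  qed
  show "(INF n::int. \<bar>\<nu> - of_int n\<bar>\<^sup>2) = \<beta>\<^sup>2"
  proof (rule cInf_eq_minimum)
    show "\<beta>\<^sup>2 \<in> range (\<lambda>n::int. \<bar>\<nu> - of_int n\<bar>\<^sup>2)"
      by (rule range_eqI[of _ _ n0]) (simp add: \<beta>_def)
  qed (use le in auto)
qed

lemma ut_norms:
  fixes \<rho> :: "real \<times> real \<Rightarrow> real"
  assumes rd: "\<forall>x. \<rho> differentiable (at x)" and ct: "continuous_on UNIV (d_theta \<rho>)"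
    and cz: "continuous_on UNIV (d_z \<rho>)" and per: "theta_periodic \<rho>"
    and nb: "\<nu> = of_int n0 + \<beta>"
  shows "(cmod (d_theta (ut n0 t c \<rho>) x - \<i> * ut n0 t c \<rho> x * of_real \<nu>))\<^sup>2
           = \<beta>\<^sup>2 * (1 + t * (\<rho> x - c))\<^sup>2 + (t * d_theta \<rho> x)\<^sup>2"
    and "(cmod (d_z (ut n0 t c \<rho>) x))\<^sup>2 = (t * d_z \<rho> x)\<^sup>2"
    and "(cmod (ut n0 t c \<rho> x))\<^sup>2 = (1 + t * (\<rho> x - c))\<^sup>2"
proof -
  define E where "E = exp (\<i> * of_real (of_int n0 * fst x))"
  have nE: "cmod E = 1" unfolding E_def by (rule norm_exp_i_times)
  have "d_theta (ut n0 t c \<rho>) x - \<i> * ut n0 t c \<rho> x * of_real \<nu>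
      = E * (of_real (t * d_theta \<rho> x) - \<i> * of_real (\<beta> * (1 + t * (\<rho> x - c))))"
    unfolding ut_props(2)[OF rd ct cz per] unfolding ut_def E_def[symmetric] nb
    by (simp add: algebra_simps)
  then show "(cmod (d_theta (ut n0 t c \<rho>) x - \<i> * ut n0 t c \<rho> x * of_real \<nu>))\<^sup>2
           = \<beta>\<^sup>2 * (1 + t * (\<rho> x - c))\<^sup>2 + (t * d_theta \<rho> x)\<^sup>2"
    by (simp add: norm_mult nE cmod_power2 power_mult_distrib)
  show "(cmod (d_z (ut n0 t c \<rho>) x))\<^sup>2 = (t * d_z \<rho> x)\<^sup>2"
    unfolding ut_props(3)[OF rd ct cz per] E_def[symmetric] by (simp add: norm_mult nE power_mult_distrib)
  show "(cmod (ut n0 t c \<rho> x))\<^sup>2 = (1 + t * (\<rho> x - c))\<^sup>2"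
    unfolding ut_def E_def[symmetric] by (simp only: norm_mult nE mult_1_left norm_of_real power2_abs)
qed

lemma periodic_int:
  assumes "theta_periodic f"
  shows "f (s + 2*pi * of_int k, z) = f (s, z)"
proof -
  have nat: "f (s + 2*pi * of_nat m, z) = f (s, z)" for s and m :: nat
  proof (induction m)
    case 0 then show ?case by simp
  next
    case (Suc m)
    have "f (s + 2*pi * of_nat (Suc m), z) = f ((s + 2*pi * of_nat m) + 2*pi, z)"
      by (simp add: algebra_simps)
    also have "\<dots> = f (s + 2*pi * of_nat m, z)" using assms by (simp add: theta_periodic_def)
    finally show ?case using Suc by simp
  qed
  show ?thesis
  proof (cases "k \<ge> 0")
    case True
    then show ?thesis using nat[of s "nat k"] by simp
  next
    case False
    then have "f ((s + 2*pi * of_int k) + 2*pi * of_nat (nat (-k)), z) = f (s + 2*pi * of_int k, z)"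
      using nat by blast
    moreover have "(s + 2*pi * of_int k) + 2*pi * of_nat (nat (-k)) = s" using False by simp
    ultimately show ?thesis by simp
  qed
qed

lemma const_fund:
  fixes k :: real
  assumes "M \<ge> 0" shows "((\<lambda>x. k) has_integral (4*pi*M*k)) (fund_dom M)"
proof -
  have "((\<lambda>x. k) has_integral (measure lborel (cbox (0::real,-M) (2*pi,M)) *\<^sub>R k)) (cbox (0,-M) (2*pi,M))"
    by (rule has_integral_const)
  moreover have "measure lborel (cbox (0::real,-M) (2*pi,M)) = 4*pi*M"
    using content_Pair[of "0::real" "-M" "2*pi" M] assms by simp
  ultimately show ?thesis unfolding fund_dom_def by simp
qed


lemma box_fund_ne: "(M::real) > 0 \<Longrightarrow> box (0::real, -M) (2*pi, M) \<noteq> {}"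
proof -
  assume "M > 0"
  then have "(pi, 0) \<in> box (0::real, -M) (2*pi, M)"
    by (auto simp: mem_box Basis_prod_def inner_Pair Basis_real_def)
  then show ?thesis by blast
qed

lemma fund_strip: "x \<in> fund_dom M \<Longrightarrow> x \<in> strip M"
  by (cases x) (auto simp: fund_dom_def strip_def)

lemma frac_cross:
  fixes a b A m :: real
  assumes "a / A \<le> b / m" "A > 0" "m > 0"
  shows "a * m \<le> A * b"
proof -
  have "a / A * (A * m) \<le> b / m * (A * m)" using assms by (intro mult_right_mono) auto
  moreover have "a / A * (A * m) = a * m" using assms by simp
  moreover have "b / m * (A * m) = A * b" using assms by simp
  ultimately show ?thesis by simp
qed
lemma key_id:
  fixes A B D G Q R K t :: real
  assumes "K = A * B * G + A * R - B * D * Q"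
  shows "A * (B * (D + t\<^sup>2 * G) + t\<^sup>2 * R) - B * D * (A + 2 * t * G + t\<^sup>2 * Q)
          = t * (t * K) - 2 * t * (B * D * G)"
  unfolding assms power2_eq_square by (simp add: algebra_simps)
lemma contr:
  fixes t X K :: real
  assumes "t > 0" "X > 0" "t * K < X" "2 * t * X \<le> t * (t * K)"
  shows False
proof -
  have "t * (t * K) < t * X" using assms by simp
  then have "2 * t * X < t * X" using assms by linarith
  moreover have "t * X > 0" using assms by simp
  ultimately show False by linarith
qed

theorem theorem2p6:
  fixes M \<nu> :: real and \<rho> :: "real \<times> real \<Rightarrow> real"
  assumes "M > 0" and "conf_factor M \<rho>" and "\<nu> \<notin> \<int>"
  shows "area M \<rho> * mu1 M \<rho> \<nu> \<le> 4 * pi * M * (INF n::int. \<bar>\<nu> - of_int n\<bar>\<^sup>2)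
    \<and> (area M \<rho> * mu1 M \<rho> \<nu> = 4 * pi * M * (INF n::int. \<bar>\<nu> - of_int n\<bar>\<^sup>2)
         \<longleftrightarrow> homothetic_flat M \<rho>)"
proof -
  from assms(2) have sm: "smooth2 \<rho>" and per: "theta_periodic \<rho>" and pos: "\<forall>x\<in>strip M. \<rho> x > 0"
    by (auto simp: conf_factor_def)
  have rd: "\<forall>x. \<rho> differentiable (at x)" using smooth2_props(1)[OF sm] .
  have ct: "continuous_on UNIV (d_theta \<rho>)" using diff_cont[OF smooth2_props(1)[OF smooth2_props(2)[OF sm]]] .
  have cz: "continuous_on UNIV (d_z \<rho>)" using diff_cont[OF smooth2_props(1)[OF smooth2_props(3)[OF sm]]] .
  have cr: "continuous_on UNIV \<rho>" using diff_cont[OF rd] .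
  have M0: "0 \<le> M" using assms(1) by simp
  have rpos: "x \<in> fund_dom M \<Longrightarrow> 0 < \<rho> x" for x using pos fund_strip by blast
  obtain n0 \<beta> where nb: "\<nu> = of_int n0 + \<beta>" and hb: "\<bar>\<beta>\<bar> \<le> 1/2" and b0: "\<beta> \<noteq> 0"
    and inf: "(INF n::int. \<bar>\<nu> - of_int n\<bar>\<^sup>2) = \<beta>\<^sup>2"
    using inf_dist[OF assms(3)] by blast
  define D where "D = 4*pi*M"
  have D0: "D > 0" unfolding D_def using assms(1) by simp
  have iD: "((\<lambda>x. k) has_integral D * k) (fund_dom M)" for k
    unfolding D_def using const_fund[OF M0] by simp
  define A where "A = area M \<rho>"
  have iA: "(\<rho> has_integral A) (fund_dom M)"
    unfolding A_def area_def fund_dom_def by (rule cont_has_int2[OF cr])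
  have A0: "A > 0"
  proof -
    have "compact (fund_dom M)" unfolding fund_dom_def by simp
    moreover have "(0,0) \<in> fund_dom M" using M0 by (simp add: fund_dom_def cbox_interval)
    then have "fund_dom M \<noteq> {}" by blast
    moreover have "continuous_on (fund_dom M) \<rho>" using cr by (rule continuous_on_subset) simp
    ultimately obtain y where y: "y \<in> fund_dom M" and ymin: "\<And>z. z \<in> fund_dom M \<Longrightarrow> \<rho> y \<le> \<rho> z"
      using continuous_attains_inf by metis
    have "D * \<rho> y \<le> A" by (rule has_integral_le[OF iD iA]) (use ymin in auto)
    moreover have "0 < D * \<rho> y" using D0 rpos[OF y] by simp
    ultimately show ?thesis by linarith
  qed
  define S where "S = {mag_energy M \<nu> u / l2_mass M \<rho> u | u. trial_fun u \<and> l2_mass M \<rho> u > 0}"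
  have mu: "mu1 M \<rho> \<nu> = Inf S" unfolding mu1_def S_def ..
  have Enn: "0 \<le> mag_energy M \<nu> u" for u unfolding mag_energy_def by (rule integral_nonneg_any) simp
  have bdd: "bdd_below S" unfolding S_def bdd_below_def
    by (rule exI[of _ 0]) (auto intro!: divide_nonneg_pos Enn)
  have inS: "mag_energy M \<nu> u / l2_mass M \<rho> u \<in> S" if "trial_fun u" "l2_mass M \<rho> u > 0" for u
    unfolding S_def using that by blast
  have muS: "Inf S \<le> x" if "x \<in> S" for x by (rule cInf_lower[OF that bdd])
  have ut_E: "mag_energy M \<nu> (ut n0 t c \<rho>) = integral (fund_dom M)
      (\<lambda>x. \<beta>\<^sup>2 * (1 + t * (\<rho> x - c))\<^sup>2 + (t * d_theta \<rho> x)\<^sup>2 + (t * d_z \<rho> x)\<^sup>2)" for t c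
    unfolding mag_energy_def ut_norms(1,2)[OF rd ct cz per nb] ..
  have ut_m: "l2_mass M \<rho> (ut n0 t c \<rho>) = integral (fund_dom M) (\<lambda>x. \<rho> x * (1 + t * (\<rho> x - c))\<^sup>2)" for t c
    unfolding l2_mass_def ut_norms(3)[OF rd ct cz per nb] ..
  have ut_tr: "trial_fun (ut n0 t c \<rho>)" for t c by (rule ut_props(1)[OF rd ct cz per])
  have E0: "mag_energy M \<nu> (ut n0 0 0 \<rho>) = \<beta>\<^sup>2 * D"
    unfolding ut_E using integral_unique[OF iD[of "\<beta>\<^sup>2"]] by (simp add: mult.commute)
  have m0: "l2_mass M \<rho> (ut n0 0 0 \<rho>) = A"
    unfolding ut_m using integral_unique[OF iA] by simp
  have S0: "\<beta>\<^sup>2 * D / A \<in> S" using inS[OF ut_tr, of 0 0] E0 m0 A0 by simp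
  have up: "mu1 M \<rho> \<nu> \<le> \<beta>\<^sup>2 * D / A" unfolding mu using muS[OF S0] .
  have part1: "A * mu1 M \<rho> \<nu> \<le> \<beta>\<^sup>2 * D"
  proof -
    have "A * mu1 M \<rho> \<nu> \<le> A * (\<beta>\<^sup>2 * D / A)" using up A0 by (intro mult_left_mono) auto
    then show ?thesis using A0 by simp
  qed
  have part2: "A * mu1 M \<rho> \<nu> = \<beta>\<^sup>2 * D \<longleftrightarrow> homothetic_flat M \<rho>"
  proof
    assume hom: "homothetic_flat M \<rho>"
    then obtain c0 where c0: "c0 > 0" and rc0: "\<And>x. x \<in> strip M \<Longrightarrow> \<rho> x = c0"
      unfolding homothetic_flat_def by blast
    have rc: "x \<in> fund_dom M \<Longrightarrow> \<rho> x = c0" for x using rc0 fund_strip by blast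
    have Ac: "A = D * c0"
    proof -
      have "A = integral (fund_dom M) \<rho>" using integral_unique[OF iA] by simp
      also have "\<dots> = integral (fund_dom M) (\<lambda>x. c0)" by (rule integral_cong) (rule rc)
      also have "\<dots> = D * c0" by (rule integral_unique[OF iD])
      finally show ?thesis .
    qed
    have low: "\<beta>\<^sup>2 / c0 \<le> Inf S"
    proof (rule cInf_greatest)
      show "S \<noteq> {}" using S0 by blast
    next
      fix y assume "y \<in> S"
      then obtain u where u: "trial_fun u" and mpos: "l2_mass M \<rho> u > 0"
        and y: "y = mag_energy M \<nu> u / l2_mass M \<rho> u" unfolding S_def by blast
      have uc: "continuous_on UNIV u" by (rule trial_cont[OF u])
      have cth: "continuous_on UNIV (d_theta u)" and czu: "continuous_on UNIV (d_z u)"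
        using u by (auto simp: trial_fun_def)
      define N where "N = integral (fund_dom M) (\<lambda>x. (cmod (u x))\<^sup>2)"
      define F1 where "F1 = integral (fund_dom M) (\<lambda>x. (cmod (d_theta u x - \<i> * u x * of_real \<nu>))\<^sup>2)"
      define F2 where "F2 = integral (fund_dom M) (\<lambda>x. (cmod (d_z u x))\<^sup>2)"
      have mN: "l2_mass M \<rho> u = c0 * N"
      proof -
        have "l2_mass M \<rho> u = integral (fund_dom M) (\<lambda>x. c0 * (cmod (u x))\<^sup>2)"
          unfolding l2_mass_def by (rule integral_cong) (simp add: rc)
        also have "\<dots> = c0 * N" unfolding N_def fund_dom_def
          by (rule integral_unique, intro has_integral_mult_right cont_has_int2 continuous_intros uc)
        finally show ?thesis .
      qed
      have EF: "mag_energy M \<nu> u = F1 + F2" unfolding mag_energy_def F1_def F2_def fund_dom_def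
        by (rule integral_unique, intro has_integral_add cont_has_int2 continuous_intros uc cth czu)
      have F2: "0 \<le> F2" unfolding F2_def by (rule integral_nonneg_any) simp
      have F1: "\<beta>\<^sup>2 * N \<le> F1" unfolding F1_def N_def by (rule energy_lower[OF u M0 hb nb])
      have N0: "N > 0" using mpos mN c0 by (simp add: zero_less_mult_iff)
      have "\<beta>\<^sup>2 / c0 = (\<beta>\<^sup>2 * N) / (c0 * N)" using N0 by simp
      also have "\<dots> \<le> mag_energy M \<nu> u / (c0 * N)"
        using F1 F2 EF c0 N0 by (intro divide_right_mono) auto
      finally show "\<beta>\<^sup>2 / c0 \<le> y" unfolding y mN .
    qed
    have "\<beta>\<^sup>2 * D \<le> A * mu1 M \<rho> \<nu>"
    proof -
      have "A * (\<beta>\<^sup>2 / c0) \<le> A * mu1 M \<rho> \<nu>" unfolding mu using low A0 by (intro mult_left_mono) auto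
      moreover have "A * (\<beta>\<^sup>2 / c0) = \<beta>\<^sup>2 * D" unfolding Ac using c0 by simp
      ultimately show ?thesis by simp
    qed
    then show "A * mu1 M \<rho> \<nu> = \<beta>\<^sup>2 * D" using part1 by linarith
  next
    assume eq: "A * mu1 M \<rho> \<nu> = \<beta>\<^sup>2 * D"
    define c where "c = A / D"
    have c0: "c > 0" unfolding c_def using A0 D0 by simp
    have Dc: "A - D * c = 0" unfolding c_def using D0 by simp
    have mueq: "mu1 M \<rho> \<nu> = \<beta>\<^sup>2 * D / A" using eq A0 by (simp add: eq_divide_eq mult.commute)
    define G where "G = integral (fund_dom M) (\<lambda>x. (\<rho> x - c)\<^sup>2)"
    define Q where "Q = integral (fund_dom M) (\<lambda>x. \<rho> x * (\<rho> x - c)\<^sup>2)"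
    define R where "R = integral (fund_dom M) (\<lambda>x. (d_theta \<rho> x)\<^sup>2 + (d_z \<rho> x)\<^sup>2)"
    have iG: "((\<lambda>x. (\<rho> x - c)\<^sup>2) has_integral G) (fund_dom M)"
      unfolding G_def fund_dom_def by (intro cont_has_int2 continuous_intros cr)
    have iQ: "((\<lambda>x. \<rho> x * (\<rho> x - c)\<^sup>2) has_integral Q) (fund_dom M)"
      unfolding Q_def fund_dom_def by (intro cont_has_int2 continuous_intros cr)
    have iR: "((\<lambda>x. (d_theta \<rho> x)\<^sup>2 + (d_z \<rho> x)\<^sup>2) has_integral R) (fund_dom M)"
      unfolding R_def fund_dom_def by (intro cont_has_int2 continuous_intros ct cz)
    have iI: "((\<lambda>x. \<rho> x - c) has_integral A - D * c) (fund_dom M)"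
      by (intro has_integral_diff iA iD)
    have G0: "0 \<le> G" by (rule has_integral_nonneg[OF iG]) simp
    have Q0: "0 \<le> Q" by (rule has_integral_nonneg[OF iQ]) (metis rpos less_imp_le mult_nonneg_nonneg zero_le_power2)
    define K where "K = A * \<beta>\<^sup>2 * G + A * R - \<beta>\<^sup>2 * D * Q"
    have key: "2 * t * (\<beta>\<^sup>2 * D * G) \<le> t * (t * K)" if t: "t > 0" for t
    proof -
      have fE: "(\<lambda>x. \<beta>\<^sup>2 * (1 + t * (\<rho> x - c))\<^sup>2 + (t * d_theta \<rho> x)\<^sup>2 + (t * d_z \<rho> x)\<^sup>2)
          = (\<lambda>x. \<beta>\<^sup>2 * (1 + (2 * t) * (\<rho> x - c) + t\<^sup>2 * (\<rho> x - c)\<^sup>2) + t\<^sup>2 * ((d_theta \<rho> x)\<^sup>2 + (d_z \<rho> x)\<^sup>2))"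
        by (rule ext) (simp add: power2_eq_square algebra_simps)
      have hE: "((\<lambda>x. \<beta>\<^sup>2 * (1 + (2 * t) * (\<rho> x - c) + t\<^sup>2 * (\<rho> x - c)\<^sup>2) + t\<^sup>2 * ((d_theta \<rho> x)\<^sup>2 + (d_z \<rho> x)\<^sup>2))
          has_integral \<beta>\<^sup>2 * (D * 1 + (2 * t) * (A - D * c) + t\<^sup>2 * G) + t\<^sup>2 * R) (fund_dom M)"
        by (intro has_integral_add has_integral_mult_right iD iI iG iR)
      have Et: "mag_energy M \<nu> (ut n0 t c \<rho>) = \<beta>\<^sup>2 * (D + t\<^sup>2 * G) + t\<^sup>2 * R"
        unfolding ut_E fE using integral_unique[OF hE] Dc by simp
      have fm: "(\<lambda>x. \<rho> x * (1 + t * (\<rho> x - c))\<^sup>2)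
          = (\<lambda>x. \<rho> x + (2 * t) * ((\<rho> x - c)\<^sup>2 + c * (\<rho> x - c)) + t\<^sup>2 * (\<rho> x * (\<rho> x - c)\<^sup>2))"
        by (rule ext) (simp add: power2_eq_square algebra_simps)
      have hm: "((\<lambda>x. \<rho> x + (2 * t) * ((\<rho> x - c)\<^sup>2 + c * (\<rho> x - c)) + t\<^sup>2 * (\<rho> x * (\<rho> x - c)\<^sup>2))
          has_integral A + (2 * t) * (G + c * (A - D * c)) + t\<^sup>2 * Q) (fund_dom M)"
        by (intro has_integral_add has_integral_mult_right iA iI iG iQ)
      have mt: "l2_mass M \<rho> (ut n0 t c \<rho>) = A + 2 * t * G + t\<^sup>2 * Q"
        unfolding ut_m fm using integral_unique[OF hm] Dc by simp
      have mpos: "A + 2 * t * G + t\<^sup>2 * Q > 0"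
        using A0 G0 Q0 t by (intro add_pos_nonneg) auto
      have "\<beta>\<^sup>2 * D / A \<le> (\<beta>\<^sup>2 * (D + t\<^sup>2 * G) + t\<^sup>2 * R) / (A + 2 * t * G + t\<^sup>2 * Q)"
        using muS[OF inS[OF ut_tr, of t c]] mpos unfolding mt Et mu[symmetric] mueq by simp
      then have ineq: "\<beta>\<^sup>2 * D * (A + 2 * t * G + t\<^sup>2 * Q) \<le> A * (\<beta>\<^sup>2 * (D + t\<^sup>2 * G) + t\<^sup>2 * R)"
        using frac_cross[OF _ A0 mpos] by simp
      have id: "A * (\<beta>\<^sup>2 * (D + t\<^sup>2 * G) + t\<^sup>2 * R) - \<beta>\<^sup>2 * D * (A + 2 * t * G + t\<^sup>2 * Q)
          = t * (t * K) - 2 * t * (\<beta>\<^sup>2 * D * G)"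
        by (rule key_id[OF K_def])
      show ?thesis using ineq id by linarith
    qed
    have GG: "G = 0"
    proof (rule ccontr)
      assume "G \<noteq> 0"
      then have Gp: "G > 0" using G0 by simp
      define X where "X = \<beta>\<^sup>2 * D * G"
      have X0: "X > 0" unfolding X_def using b0 D0 Gp by simp
      define t where "t = X / (\<bar>K\<bar> + 1)"
      have t0: "t > 0" unfolding t_def using X0 by simp
      have "t * K \<le> t * \<bar>K\<bar>" using t0 by (intro mult_left_mono) auto
      also have "\<dots> < t * (\<bar>K\<bar> + 1)" using t0 by simp
      also have "\<dots> = X" unfolding t_def by simp
      finally have tk: "t * K < X" .
      have "2 * t * X \<le> t * (t * K)" using key[OF t0] unfolding X_def .
      then show False using contr[OF t0 X0 tk] by blast
    qed
    have rcb: "\<rho> x = c" if "x \<in> fund_dom M" for x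
    proof -
      have "\<forall>x\<in>cbox (0, -M) (2*pi, M). (\<rho> x - c)\<^sup>2 = 0"
      proof (subst integral_cbox_eq_0_iff[symmetric])
        show "continuous_on (cbox (0, -M) (2*pi, M)) (\<lambda>x. (\<rho> x - c)\<^sup>2)"
          by (intro continuous_intros continuous_on_subset[OF cr]) auto
        show "box (0, -M) (2*pi, M) \<noteq> {}" by (rule box_fund_ne[OF assms(1)])
        show "integral (cbox (0, -M) (2*pi, M)) (\<lambda>x. (\<rho> x - c)\<^sup>2) = 0"
          using GG unfolding G_def fund_dom_def .
      qed simp
      then show ?thesis using that unfolding fund_dom_def by simp
    qed
    show "homothetic_flat M \<rho>" unfolding homothetic_flat_def
    proof (intro exI conjI ballI)
      show "c > 0" by (rule c0)
      fix x assume x: "x \<in> strip M"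
      obtain s z where xsz: "x = (s,z)" by (cases x)
      have z: "-M \<le> z" "z \<le> M" using x xsz by (auto simp: strip_def)
      define k where "k = - \<lfloor>s / (2*pi)\<rfloor>"
      have "s + 2*pi * of_int k \<ge> 0"
      proof -
        have "of_int \<lfloor>s / (2*pi)\<rfloor> \<le> s / (2*pi)" by (rule of_int_floor_le)
        then have "2*pi * of_int \<lfloor>s / (2*pi)\<rfloor> \<le> 2*pi * (s / (2*pi))" by (rule mult_left_mono) simp
        then have "2*pi * of_int \<lfloor>s / (2*pi)\<rfloor> \<le> s" by simp
        then show ?thesis unfolding k_def by simp
      qed
      moreover have "s + 2*pi * of_int k \<le> 2*pi"
      proof -
        have "s / (2*pi) < of_int \<lfloor>s / (2*pi)\<rfloor> + 1" by (rule real_of_int_floor_add_one_gt)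
        then have "2*pi * (s / (2*pi)) < 2*pi * (of_int \<lfloor>s / (2*pi)\<rfloor> + 1)" by (rule mult_strict_left_mono) simp
        then have "s < 2*pi * of_int \<lfloor>s / (2*pi)\<rfloor> + 2*pi" by (simp add: distrib_left)
        then show ?thesis unfolding k_def by simp
      qed
      ultimately have "(s + 2*pi * of_int k, z) \<in> fund_dom M"
        using z by (auto simp: fund_dom_def)
      then have "\<rho> (s + 2*pi * of_int k, z) = c" by (rule rcb)
      then show "\<rho> x = c" unfolding xsz periodic_int[OF per] .
    qed
  qed
  show ?thesis
    unfolding inf A_def[symmetric] D_def[symmetric]
    using part1 part2 by (simp add: mult.commute)
qed

end
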